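(* For any positive integers $r$ and $n$ with $\omega(n)\geq 2$ and $n\in F_r$, $\displaystyle P_1(n)<Q_1(n)\left(1-J_r+\frac{J_r}{r}Q_1(n)\right)$.
   Context: For a positive integer $r$, $S_r$ is the multiplicative arithmetic function with $S_r(p^{\alpha})=0$ if $p\leq r$ and $S_r(p^{\alpha})=p^{\alpha-1}(p-r)$ if $p>r$, for all primes $p$ and positive integers $\alpha$. $B_r=\{n\in\mathbb{N}: S_r(n)>0\}$ (positive integers whose smallest prime factor exceeds $r$, together with $1$). $F_r$ is the set of $n\in B_r$ such that $S_r(n)<S_r(m)$ for all $m\in B_r$ with $m>n$. $\omega(n)$ is the number of distinct prime factors of $n$. $P_1(n)$ is the largest prime divisor of $n$, and $Q_1(n)$ is the smallest prime that is larger than $r$ and does not divide $n$. $r\#$ is the product of all primes $\leq r$ (with $1\#=1$). The Jacobsthal function $J(m)$ is the smallest positive integer $a$ such that every set of $a$ consecutive integers contains an element coprime to $m$; $J_r=J(r\#)$. *)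

theory Defs
  imports Complex_Main "HOL-Computational_Algebra.Primes"
begin

definition S :: "nat \<Rightarrow> nat \<Rightarrow> nat" where
  "S r n = (\<Prod>p\<in>prime_factors n.
              (if p \<le> r then 0 else p ^ (multiplicity p n - 1) * (p - r)))"

definition B :: "nat \<Rightarrow> nat set" where
  "B r = {n. n > 0 \<and> S r n > 0}"

definition F :: "nat \<Rightarrow> nat set" where
  "F r = {n \<in> B r. \<forall>m \<in> B r. m > n \<longrightarrow> S r n < S r m}"

definition omega :: "nat \<Rightarrow> nat" where
  "omega n = card (prime_factors n)"

definition P1 :: "nat \<Rightarrow> nat" where
  "P1 n = Max (prime_factors n)"

definition Q1 :: "nat \<Rightarrow> nat \<Rightarrow> nat" where
  "Q1 r n = (LEAST q. prime q \<and> q > r \<and> \<not> q dvd n)"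

definition primorial :: "nat \<Rightarrow> nat" where
  "primorial r = \<Prod>{p. prime p \<and> p \<le> r}"

definition jacobsthal :: "nat \<Rightarrow> nat" where
  "jacobsthal m = (LEAST a. a > 0 \<and> (\<forall>k::int. \<exists>i<a. coprime (k + int i) (int m)))"

definition Jr :: "nat \<Rightarrow> nat" where
  "Jr r = jacobsthal (primorial r)"

end

theory Submission imports Defs begin

definition Rs :: "nat \<Rightarrow> nat set \<Rightarrow> real" where
  "Rs r A = (\<Prod>p\<in>A. 1 - real r / real p)"

lemma S_pos_imp:
  assumes "n > 0" "S r n > 0" "p \<in> prime_factors n" shows "r < p"
proof (rule ccontr)
  assume "\<not> r < p"
  hence "S r n = 0" unfolding S_def using assms(3)
    by (intro prod_zero) (auto intro!: bexI[where x=p])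
  with assms show False by simp
qed

lemma S_pos_if:
  assumes "\<forall>p\<in>prime_factors n. r < p" shows "S r n > 0"
  unfolding S_def using assms
  by (intro prod_pos) (auto dest: in_prime_factors_imp_prime prime_gt_0_nat)

lemma S_eq:
  assumes "n > 0" "\<forall>p\<in>prime_factors n. r < p"
  shows "real (S r n) = real n * Rs r (prime_factors n)"
proof -
  have "real (S r n) = (\<Prod>p\<in>prime_factors n. real p ^ (multiplicity p n - 1) * (real p - real r))"
    unfolding S_def of_nat_prod using assms(2)
    by (intro prod.cong) (auto simp: of_nat_diff)
  also have "\<dots> = (\<Prod>p\<in>prime_factors n. real p ^ multiplicity p n * (1 - real r / real p))"
  proof (intro prod.cong refl)
    fix p assume p: "p \<in> prime_factors n"
    hence m: "multiplicity p n > 0" using prime_factors_multiplicity by blast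
    have pp: "real p > 0" using p by (auto dest: in_prime_factors_imp_prime prime_gt_0_nat)
    have "real p ^ multiplicity p n = real p ^ (multiplicity p n - 1) * real p"
      using m by (cases "multiplicity p n") (simp_all add: power_Suc2)
    thus "real p ^ (multiplicity p n - 1) * (real p - real r) = real p ^ multiplicity p n * (1 - real r / real p)"
      using pp by (simp add: field_simps)
  qed
  also have "\<dots> = real n * Rs r (prime_factors n)"
  proof -
    have "real n = (\<Prod>p\<in>prime_factors n. real p ^ multiplicity p n)"
      using arg_cong[where f=real, OF prime_factorization_nat[OF assms(1)]]
      by (simp only: of_nat_prod of_nat_power)
    thus ?thesis unfolding Rs_def prod.distrib by simp
  qed
  finally show ?thesis .
qed

lemma Rs_nonneg: "\<forall>p\<in>A. r < p \<Longrightarrow> Rs r A \<ge> 0"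
  unfolding Rs_def by (intro prod_nonneg) auto

lemma Rs_anti:
  assumes "finite X" "Y \<subseteq> X" "\<forall>p\<in>X. r < p"
  shows "Rs r X \<le> Rs r Y"
proof -
  have "Rs r X = Rs r Y * Rs r (X - Y)"
    unfolding Rs_def using assms by (metis mult.commute prod.subset_diff)
  moreover have "Rs r (X - Y) \<le> 1" unfolding Rs_def
    using assms by (intro prod_le_1) auto
  moreover have "Rs r Y \<ge> 0" using assms by (intro Rs_nonneg) auto
  ultimately show ?thesis by (simp add: mult_left_le)
qed


lemma arith_key:
  fixes p q r d J k :: real
  assumes "r > 0" "q > r" "d * q \<le> p" "k \<le> d + J" "J \<ge> 0"
    "q * (1 - J + J / r * q) \<le> p"
  shows "k * (q - r) \<le> p - r"
proof -
  have h1: "r * q + J * q * (q - r) \<le> p * r"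
  proof -
    have "r * (q * (1 - J + J / r * q)) \<le> r * p" using assms by (intro mult_left_mono) auto
    moreover have "r * (q * (1 - J + J / r * q)) = r * q + J * q * (q - r)"
      using assms(1) by (simp add: field_simps)
    ultimately show ?thesis by (simp add: mult.commute)
  qed
  have h2: "k * (q - r) \<le> (d + J) * (q - r)" using assms by (intro mult_right_mono) auto
  have h3: "d * q * (q - r) \<le> p * (q - r)" using assms by (intro mult_right_mono) auto
  have "q * (k * (q - r)) \<le> q * ((d + J) * (q - r))" using h2 assms by (intro mult_left_mono) auto
  also have "\<dots> = d * q * (q - r) + J * q * (q - r)" by (simp add: algebra_simps)
  also have "\<dots> \<le> q * (p - r)" using h1 h3 by (simp add: algebra_simps)
  finally show ?thesis using assms by (simp add: mult_le_cancel_left_pos)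
qed

lemma primorial_pos: "primorial r > 0"
  unfolding primorial_def
  by (intro prod_pos) (auto dest: prime_gt_0_nat)

lemma primorial_dvd: "prime l \<Longrightarrow> l \<le> r \<Longrightarrow> l dvd primorial r"
  unfolding primorial_def
  by (rule dvd_prodI[where f="\<lambda>x. x", simplified]) (auto intro: finite_subset[of _ "{..r}"])

lemma coprime_primorial_factors:
  assumes "coprime k (primorial r)" "l \<in> prime_factors k"
  shows "r < l"
proof (rule ccontr)
  assume "\<not> r < l"
  hence "l dvd primorial r" using assms(2) by (intro primorial_dvd) auto
  moreover have "l dvd k" using assms(2) by auto
  ultimately have "l = 1" using assms(1) coprime_common_divisor_nat by blast
  with assms(2) show False by (metis in_prime_factors_imp_prime not_prime_1)
qed

lemma jacobsthal_prop:
  "Jr r > 0 \<and> (\<forall>k::int. \<exists>i<Jr r. coprime (k + int i) (int (primorial r)))"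
proof -
  let ?P = "int (primorial r)"
  have Ppos: "?P > 0" using primorial_pos by simp
  have "primorial r > 0 \<and> (\<forall>k::int. \<exists>i<primorial r. coprime (k + int i) ?P)"
  proof (intro conjI allI)
    show "primorial r > 0" by (rule primorial_pos)
    fix k :: int
    let ?i = "nat ((1 - k) mod ?P)"
    have i0: "(1 - k) mod ?P \<ge> 0" "(1 - k) mod ?P < ?P" using Ppos by auto
    hence "?i < primorial r" by linarith
    moreover have "coprime (k + int ?i) ?P"
    proof -
      have "(k + int ?i) mod ?P = (k + (1 - k) mod ?P) mod ?P" using i0 by simp
      also have "\<dots> = 1 mod ?P" by (simp add: mod_add_right_eq)
      finally have e: "(k + int ?i) mod ?P = 1 mod ?P" .
      have "coprime ((k + int ?i) mod ?P) ?P" unfolding e using Ppos by simp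
      thus ?thesis using Ppos by simp
    qed
    ultimately show "\<exists>i<primorial r. coprime (k + int i) ?P" by blast
  qed
  thus ?thesis unfolding Jr_def jacobsthal_def by (rule LeastI)
qed

theorem lemma3p4:
  fixes r n :: nat
  assumes "r > 0" and "n > 0" and "omega n \<ge> 2" and "n \<in> F r"
  shows "real (P1 n) < real (Q1 r n) *
           (1 - real (Jr r) + real (Jr r) / real r * real (Q1 r n))"
proof -
  have nB: "n \<in> B r" and hF: "\<And>m. m \<in> B r \<Longrightarrow> m > n \<Longrightarrow> S r n < S r m"
    using assms(4) unfolding F_def by auto
  have allr: "\<forall>l\<in>prime_factors n. r < l"
    using nB assms(2) S_pos_imp unfolding B_def by blast
  have ne: "prime_factors n \<noteq> {}" using assms(3) unfolding omega_def by auto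
  define p where "p = P1 n"
  have pin: "p \<in> prime_factors n" unfolding p_def P1_def using ne by (intro Max_in) auto
  have pprime: "prime p" and pdvd: "p dvd n" and rp: "r < p" using pin allr by auto
  define q where "q = Q1 r n"
  obtain q0 where q0: "prime q0" "q0 > r + n" using bigger_prime by blast
  have "\<not> q0 dvd n" using q0 assms(2) by (auto dest: dvd_imp_le)
  hence "prime q0 \<and> q0 > r \<and> \<not> q0 dvd n" using q0 by auto
  hence qprop: "prime q \<and> q > r \<and> \<not> q dvd n" unfolding q_def Q1_def by (rule LeastI)
  hence qprime: "prime q" and rq: "r < q" and qndvd: "\<not> q dvd n" by auto
  define J where "J = Jr r"
  have Jprop: "J > 0" "\<And>k::int. \<exists>i<J. coprime (k + int i) (int (primorial r))"
    using jacobsthal_prop unfolding J_def by auto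
  have "p \<noteq> q" using pdvd qndvd by auto
  have main: "real p < real q * (1 - real J + real J / real r * real q)"
  proof (cases "p < q")
    case True
    have "real q * (1 - real J + real J / real r * real q) - real q
          = real J * real q * (real q - real r) / real r"
      using assms(1) by (simp add: field_simps)
    moreover have "real J * real q * (real q - real r) / real r \<ge> 0" using rq by simp
    ultimately show ?thesis using True by linarith
  next
    case False
    hence qp: "q < p" using \<open>p \<noteq> q\<close> by auto
    show ?thesis
    proof (rule ccontr)
      assume bnd: "\<not> real p < real q * (1 - real J + real J / real r * real q)"
      define d where "d = p div q"
      obtain i where i: "i < J" "coprime (int (d + 1) + int i) (int (primorial r))"
        using Jprop(2) by blast
      define k where "k = d + 1 + i"
      have kcop: "coprime k (primorial r)" using i(2) unfolding k_def
        by (metis coprime_int_iff of_nat_add)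
      have kpos: "k > 0" unfolding k_def by simp
      have allk: "\<forall>l\<in>prime_factors k. r < l" using kcop coprime_primorial_factors by blast
      define y where "y = n div p"
      have ny: "n = y * p" unfolding y_def using pdvd by simp
      have ypos: "y > 0" using ny assms(2) by (cases y) auto
      have ppos: "p > 0" and qpos: "q > 0" using rp rq by auto
      define m where "m = y * q * k"
      have mpos: "m > 0" unfolding m_def using ypos qpos kpos by simp
      have pfy: "prime_factors y \<subseteq> prime_factors n"
        using ny assms(2) by (intro dvd_prime_factors) auto
      have pfn: "prime_factors n = insert p (prime_factors y)"
        unfolding ny using ypos ppos pprime by (simp add: prime_factors_product prime_prime_factors)
      have pfm: "prime_factors m = insert q (prime_factors y) \<union> prime_factors k"
        unfolding m_def using ypos qpos kpos qprime
        by (simp add: prime_factors_product prime_prime_factors)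
      have qny: "q \<notin> prime_factors y" using qndvd ny by auto
      have allm: "\<forall>l\<in>prime_factors m. r < l" using pfm pfy allr rq allk by auto
      have ally: "\<forall>l\<in>prime_factors y. r < l" using pfy allr by auto
      have mB: "m \<in> B r" unfolding B_def using mpos allm S_pos_if by blast
      have "q * (d + 1) > p"
      proof -
        have "p = q * d + p mod q" unfolding d_def by simp
        moreover have "p mod q < q" using qpos by simp
        ultimately show ?thesis by (simp add: algebra_simps)
      qed
      moreover have "q * (d + 1) \<le> q * k" unfolding k_def by simp
      ultimately have "p < q * k" by linarith
      hence "y * p < y * (q * k)" using ypos by simp
      hence "m > n" unfolding m_def ny by (simp add: mult.assoc)
      with hF[OF mB] have Slt: "real (S r n) < real (S r m)" by simp
      let ?R = "Rs r (prime_factors y)"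
      have Rnn: "?R \<ge> 0" using ally by (rule Rs_nonneg)
      have Rm: "Rs r (prime_factors m) \<le> (1 - real r / real q) * ?R"
      proof -
        have "Rs r (prime_factors m) \<le> Rs r (insert q (prime_factors y))"
          using allm pfm by (intro Rs_anti) auto
        also have "\<dots> = (1 - real r / real q) * ?R"
          unfolding Rs_def using qny by simp
        finally show ?thesis .
      qed
      have Rn: "Rs r (prime_factors n) \<ge> (1 - real r / real p) * ?R"
      proof (cases "p \<in> prime_factors y")
        case True
        hence "Rs r (prime_factors n) = ?R" using pfn by (simp add: insert_absorb)
        moreover have "(1 - real r / real p) * ?R \<le> 1 * ?R"
          using Rnn ppos by (intro mult_right_mono) auto
        ultimately show ?thesis by simp
      next
        case False
        thus ?thesis unfolding pfn Rs_def by simp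
      qed
      have ep: "real p * (1 - real r / real p) = real p - real r" using ppos by (simp add: field_simps)
      have eq: "real q * (1 - real r / real q) = real q - real r" using qpos by (simp add: field_simps)
      have Sn: "real (S r n) \<ge> real y * (real p - real r) * ?R"
      proof -
        have "real y * (real p - real r) * ?R = real y * (real p * (1 - real r / real p)) * ?R"
          by (simp only: ep)
        also have "\<dots> = real y * real p * ((1 - real r / real p) * ?R)" by (simp only: mult_ac)
        also have "\<dots> \<le> real y * real p * Rs r (prime_factors n)"
          using Rn by (intro mult_left_mono) auto
        also have "\<dots> = real (S r n)"
          using S_eq[OF assms(2) allr] ny by simp
        finally show ?thesis .
      qed
      have Sm: "real (S r m) \<le> real y * (real k * (real q - real r)) * ?R"
      proof -
        have "real (S r m) = real y * real q * real k * Rs r (prime_factors m)"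
          using S_eq[OF mpos allm] unfolding m_def by simp
        also have "\<dots> \<le> real y * real q * real k * ((1 - real r / real q) * ?R)"
          using Rm by (intro mult_left_mono) auto
        also have "\<dots> = real y * (real k * (real q * (1 - real r / real q))) * ?R"
          by (simp only: mult_ac)
        also have "\<dots> = real y * (real k * (real q - real r)) * ?R"
          by (simp only: eq)
        finally show ?thesis .
      qed
      have dq: "real d * real q \<le> real p"
      proof -
        have "d * q \<le> p" unfolding d_def using div_mult_mod_eq[of p q] by linarith
        thus ?thesis by (metis of_nat_le_iff of_nat_mult)
      qed
      have kle: "real k \<le> real d + real J" unfolding k_def using i(1) by simp
      have bnd': "real q * (1 - real J + real J / real r * real q) \<le> real p" using bnd by linarith
      have key: "real k * (real q - real r) \<le> real p - real r"
        by (rule arith_key[OF _ _ dq kle _ bnd']) (use assms(1) rq in auto)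
      have "real (S r m) \<le> real y * (real p - real r) * ?R"
      proof -
        have "real y * (real k * (real q - real r)) \<le> real y * (real p - real r)"
          using key by (intro mult_left_mono) auto
        hence "real y * (real k * (real q - real r)) * ?R \<le> real y * (real p - real r) * ?R"
          using Rnn by (intro mult_right_mono) auto
        thus ?thesis using Sm by linarith
      qed
      with Sn Slt show False by linarith
    qed
  qed
  thus ?thesis unfolding p_def q_def J_def .
qed

end
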